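(* Let $\mathcal{C}=\{C_1,\dots,C_k\}\subset\mathbb{P}^2_{\mathbb{C}}$ be a $d$-arrangement of $k\geq 4$ smooth curves of degree $d$ with $t_2\neq 0$ and $t_r=0$ for all $r>2$. Then the Levi graph $G$ of $\mathcal{C}$ contains an induced cycle of length $2k$.
   Context: A $d$-arrangement is an arrangement $\mathcal{C}=\{C_1,\dots,C_k\}$ of $k\geq 3$ smooth plane curves all of the same degree $d\geq 1$ such that the singular locus $\mathrm{Sing}(\mathcal{C})$ consists only of ordinary intersection points (locally like intersections of lines). For $r\geq 2$, $t_r$ denotes the number of points of $\mathrm{Sing}(\mathcal{C})$ lying on exactly $r$ curves of $\mathcal{C}$. The Levi graph of $\mathcal{C}$ is the bipartite graph with one vertex for each point $p\in\mathrm{Sing}(\mathcal{C})$, one vertex for each curve $C_j$, and an edge between the vertex of $p$ and the vertex of $C_j$ iff $p\in C_j$. *)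

theory Defs
  imports Complex_Main
begin

text \<open>Homogeneous polynomials of degree d in three variables over the complex numbers are
represented by their coefficient functions on the exponent triples (a,b,c) with a+b+c = d.
Coefficients of other triples are ignored.\<close>

type_synonym cvec3 = "complex \<times> complex \<times> complex"
type_synonym hpoly = "nat \<times> nat \<times> nat \<Rightarrow> complex"

definition hmonos :: "nat \<Rightarrow> (nat \<times> nat \<times> nat) set" where
  "hmonos d = {(a, b, c). a + b + c = d}"

definition hpoly_nonzero :: "nat \<Rightarrow> hpoly \<Rightarrow> bool" where
  "hpoly_nonzero d F \<longleftrightarrow> (\<exists>m\<in>hmonos d. F m \<noteq> 0)"

definition heval :: "nat \<Rightarrow> hpoly \<Rightarrow> cvec3 \<Rightarrow> complex" where
  "heval d F v = (case v of (x, y, z) \<Rightarrow>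
     (\<Sum>(a, b, c)\<in>hmonos d. F (a, b, c) * x ^ a * y ^ b * z ^ c))"

definition hdx :: "nat \<Rightarrow> hpoly \<Rightarrow> cvec3 \<Rightarrow> complex" where
  "hdx d F v = (case v of (x, y, z) \<Rightarrow>
     (\<Sum>(a, b, c)\<in>hmonos d. F (a, b, c) * of_nat a * x ^ (a - 1) * y ^ b * z ^ c))"

definition hdy :: "nat \<Rightarrow> hpoly \<Rightarrow> cvec3 \<Rightarrow> complex" where
  "hdy d F v = (case v of (x, y, z) \<Rightarrow>
     (\<Sum>(a, b, c)\<in>hmonos d. F (a, b, c) * of_nat b * x ^ a * y ^ (b - 1) * z ^ c))"

definition hdz :: "nat \<Rightarrow> hpoly \<Rightarrow> cvec3 \<Rightarrow> complex" where
  "hdz d F v = (case v of (x, y, z) \<Rightarrow>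
     (\<Sum>(a, b, c)\<in>hmonos d. F (a, b, c) * of_nat c * x ^ a * y ^ b * z ^ (c - 1)))"

definition hgrad :: "nat \<Rightarrow> hpoly \<Rightarrow> cvec3 \<Rightarrow> cvec3" where
  "hgrad d F v = (hdx d F v, hdy d F v, hdz d F v)"

definition cscale :: "complex \<Rightarrow> cvec3 \<Rightarrow> cvec3" where
  "cscale c v = (case v of (x, y, z) \<Rightarrow> (c * x, c * y, c * z))"

text \<open>Points of the complex projective plane: the set of nonzero multiples of a nonzero vector.\<close>
definition proj_point :: "cvec3 \<Rightarrow> cvec3 set" where
  "proj_point v = {cscale c v | c. c \<noteq> 0}"

definition zero_locus :: "nat \<Rightarrow> hpoly \<Rightarrow> cvec3 set set" where
  "zero_locus d F = {proj_point v | v. v \<noteq> (0, 0, 0) \<and> heval d F v = 0}"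

definition smooth_curve :: "nat \<Rightarrow> hpoly \<Rightarrow> bool" where
  "smooth_curve d F \<longleftrightarrow> hpoly_nonzero d F \<and>
     (\<forall>v. v \<noteq> (0, 0, 0) \<and> heval d F v = 0 \<longrightarrow> hgrad d F v \<noteq> (0, 0, 0))"

definition arr_sing :: "nat \<Rightarrow> nat \<Rightarrow> (nat \<Rightarrow> hpoly) \<Rightarrow> cvec3 set set" where
  "arr_sing d k F = {p. \<exists>i<k. \<exists>j<k. i \<noteq> j \<and> p \<in> zero_locus d (F i) \<and> p \<in> zero_locus d (F j)}"

definition arr_mult :: "nat \<Rightarrow> nat \<Rightarrow> (nat \<Rightarrow> hpoly) \<Rightarrow> cvec3 set \<Rightarrow> nat" where
  "arr_mult d k F p = card {i. i < k \<and> p \<in> zero_locus d (F i)}"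

definition arr_t :: "nat \<Rightarrow> nat \<Rightarrow> (nat \<Rightarrow> hpoly) \<Rightarrow> nat \<Rightarrow> nat" where
  "arr_t d k F r = card {p \<in> arr_sing d k F. arr_mult d k F p = r}"

text \<open>d-arrangement: k >= 3 distinct smooth curves of degree d >= 1 whose intersection points are
ordinary, i.e. at every common point of two curves their tangent lines are distinct
(gradients not proportional).\<close>
definition d_arrangement :: "nat \<Rightarrow> nat \<Rightarrow> (nat \<Rightarrow> hpoly) \<Rightarrow> bool" where
  "d_arrangement d k F \<longleftrightarrow> d \<ge> 1 \<and> k \<ge> 3 \<and>
     (\<forall>i<k. smooth_curve d (F i)) \<and>
     (\<forall>i<k. \<forall>j<k. i \<noteq> j \<longrightarrow> zero_locus d (F i) \<noteq> zero_locus d (F j)) \<and>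
     (\<forall>i<k. \<forall>j<k. \<forall>v. i \<noteq> j \<and> v \<noteq> (0, 0, 0) \<and> heval d (F i) v = 0 \<and> heval d (F j) v = 0
        \<longrightarrow> (\<forall>c. hgrad d (F i) v \<noteq> cscale c (hgrad d (F j) v)))"

definition levi_verts :: "nat \<Rightarrow> nat \<Rightarrow> (nat \<Rightarrow> hpoly) \<Rightarrow> (cvec3 set + nat) set" where
  "levi_verts d k F = Inl ` arr_sing d k F \<union> Inr ` {..<k}"

definition levi_adj :: "nat \<Rightarrow> nat \<Rightarrow> (nat \<Rightarrow> hpoly) \<Rightarrow> (cvec3 set + nat) \<Rightarrow> (cvec3 set + nat) \<Rightarrow> bool" where
  "levi_adj d k F u w \<longleftrightarrow>
     (\<exists>p j. p \<in> arr_sing d k F \<and> j < k \<and> p \<in> zero_locus d (F j) \<and>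
        ((u = Inl p \<and> w = Inr j) \<or> (u = Inr j \<and> w = Inl p)))"

definition has_induced_cycle :: "'v set \<Rightarrow> ('v \<Rightarrow> 'v \<Rightarrow> bool) \<Rightarrow> nat \<Rightarrow> bool" where
  "has_induced_cycle V adj n \<longleftrightarrow> n \<ge> 3 \<and>
     (\<exists>vs. length vs = n \<and> distinct vs \<and> set vs \<subseteq> V \<and>
        (\<forall>i<n. \<forall>j<n. adj (vs ! i) (vs ! j) \<longleftrightarrow> (j = Suc i mod n \<or> i = Suc j mod n)))"

end

theory Submission
  imports Defs "HOL-Analysis.Analysis" "Jordan_Normal_Form.Determinant"
    "HOL-Computational_Algebra.Fundamental_Theorem_Algebra"
    "HOL-Computational_Algebra.Polynomial_Factorial" "HOL-Computational_Algebra.Field_as_Ring"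
begin


lemma hmonos_finite: "finite (hmonos d)"
proof -
  have "hmonos d \<subseteq> {0..d} \<times> {0..d} \<times> {0..d}" unfolding hmonos_def by auto
  thus ?thesis by (rule finite_subset) auto
qed

lemma heval_scale: "heval d F (cscale c v) = c ^ d * heval d F v"
proof -
  obtain x y z where v: "v = (x,y,z)" by (cases v) auto
  have "heval d F (cscale c v) = (\<Sum>(a,b,e)\<in>hmonos d. c ^ d * (F (a,b,e) * x ^ a * y ^ b * z ^ e))"
    unfolding heval_def cscale_def v
    apply simp
    apply (rule sum.cong[OF refl])
    apply (clarsimp simp: hmonos_def power_mult_distrib)
    apply (simp add: power_add mult_ac)
    done
  also have "\<dots> = c ^ d * heval d F v"
    unfolding heval_def v by (simp add: sum_distrib_left case_prod_unfold)
  finally show ?thesis .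
qed

definition cf :: "nat \<Rightarrow> hpoly \<Rightarrow> nat \<Rightarrow> complex \<Rightarrow> complex \<Rightarrow> complex" where
  "cf d F k x y = (\<Sum>m\<in>{m\<in>hmonos d. snd (snd m) = k}. F m * x ^ fst m * y ^ fst (snd m))"

lemma heval_cf: "heval d F (x,y,t) = (\<Sum>k\<le>d. cf d F k x y * t ^ k)"
proof -
  have "(\<Sum>k\<le>d. cf d F k x y * t ^ k) =
     (\<Sum>k\<le>d. \<Sum>m\<in>{m\<in>hmonos d. snd (snd m) = k}. F m * x ^ fst m * y ^ fst (snd m) * t ^ snd (snd m))"
    unfolding cf_def sum_distrib_right by (intro sum.cong refl) auto
  also have "\<dots> = (\<Sum>m\<in>hmonos d. F m * x ^ fst m * y ^ fst (snd m) * t ^ snd (snd m))"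
    by (rule sum.group[OF hmonos_finite finite_atMost]) (auto simp: hmonos_def)
  also have "\<dots> = heval d F (x,y,t)"
    unfolding heval_def by (simp add: case_prod_unfold)
  finally show ?thesis by simp
qed

lemma cf_top: "cf d F d x y = F (0,0,d)"
proof -
  have "{m\<in>hmonos d. snd (snd m) = d} = {(0,0,d)}" by (auto simp: hmonos_def)
  thus ?thesis unfolding cf_def by simp
qed

lemma cf_hom: "cf d F k (l*x) (l*y) = l ^ (d - k) * cf d F k x y"
  unfolding cf_def sum_distrib_left
proof (rule sum.cong[OF refl])
  fix m assume "m \<in> {m\<in>hmonos d. snd (snd m) = k}"
  then have "fst m + fst (snd m) = d - k" by (auto simp: hmonos_def)
  then show "F m * (l * x) ^ fst m * (l * y) ^ fst (snd m) = l ^ (d - k) * (F m * x ^ fst m * y ^ fst (snd m))"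
    by (auto simp: power_mult_distrib power_add[symmetric] algebra_simps)
qed

definition polyfun :: "(complex \<Rightarrow> complex) \<Rightarrow> bool" where
  "polyfun f \<longleftrightarrow> (\<exists>p. \<forall>z. f z = poly p z)"

lemma polyfun_const[intro]: "polyfun (\<lambda>z. c)"
  unfolding polyfun_def by (rule exI[of _ "[:c:]"]) simp

lemma polyfun_id[intro]: "polyfun (\<lambda>z. z)"
  unfolding polyfun_def by (rule exI[of _ "[:0,1:]"]) simp

lemma polyfun_add[intro]: "polyfun f \<Longrightarrow> polyfun g \<Longrightarrow> polyfun (\<lambda>z. f z + g z)"
  unfolding polyfun_def by (metis poly_add)

lemma polyfun_mult[intro]: "polyfun f \<Longrightarrow> polyfun g \<Longrightarrow> polyfun (\<lambda>z. f z * g z)"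
  unfolding polyfun_def by (metis poly_mult)

lemma polyfun_power[intro]: "polyfun f \<Longrightarrow> polyfun (\<lambda>z. f z ^ n)"
  by (induction n) auto

lemma polyfun_sum[intro]: "(\<And>i. i \<in> A \<Longrightarrow> polyfun (f i)) \<Longrightarrow> polyfun (\<lambda>z. \<Sum>i\<in>A. f i z)"
proof (induction A rule: infinite_finite_induct)
  case (insert x F) then show ?case by (simp add: polyfun_add)
qed auto

lemma polyfun_prod[intro]: "(\<And>i. i \<in> A \<Longrightarrow> polyfun (f i)) \<Longrightarrow> polyfun (\<lambda>z. \<Prod>i\<in>A. f i z)"
proof (induction A rule: infinite_finite_induct)
  case (insert x F) then show ?case by (simp add: polyfun_mult)
qed auto

lemma polyfun_if[intro]: "polyfun f \<Longrightarrow> polyfun g \<Longrightarrow> polyfun (\<lambda>z. if P then f z else g z)"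
  by (cases P) auto

lemma cf_poly1: "polyfun (\<lambda>y. cf d F k 1 y)"
  unfolding cf_def by (intro polyfun_sum polyfun_mult polyfun_power polyfun_const polyfun_id)

lemma cf_poly2: "polyfun (\<lambda>x. cf d F k x 1)"
  unfolding cf_def by (intro polyfun_sum polyfun_mult polyfun_power polyfun_const polyfun_id)

definition sy :: "nat \<Rightarrow> hpoly \<Rightarrow> hpoly \<Rightarrow> complex \<Rightarrow> complex \<Rightarrow> nat \<Rightarrow> nat \<Rightarrow> complex" where
  "sy d F G x y i j = (if i < d then (if i \<le> j \<and> j - i \<le> d then cf d F (j - i) x y else 0)
      else (if i - d \<le> j \<and> j - (i - d) \<le> d then cf d G (j - (i - d)) x y else 0))"

definition SM :: "nat \<Rightarrow> hpoly \<Rightarrow> hpoly \<Rightarrow> complex \<Rightarrow> complex \<Rightarrow> complex mat" where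
  "SM d F G x y = mat (2*d) (2*d) (\<lambda>(i,j). sy d F G x y i j)"

definition RR :: "nat \<Rightarrow> hpoly \<Rightarrow> hpoly \<Rightarrow> complex \<Rightarrow> complex \<Rightarrow> complex" where
  "RR d F G x y = Determinant.det (SM d F G x y)"

lemma RR_expand: "RR d F G x y = (\<Sum>p | p permutes {0..<2*d}.
        of_int (sign p) * (\<Prod>i = 0..<2*d. sy d F G x y i (p i)))"
proof -
  have "RR d F G x y = (\<Sum>p | p permutes {0..<2*d}.
        of_int (sign p) * (\<Prod>i = 0..<2*d. SM d F G x y $$ (i, p i)))"
    unfolding RR_def Determinant.det_def by (simp add: SM_def)
  also have "\<dots> = (\<Sum>p | p permutes {0..<2*d}.
        of_int (sign p) * (\<Prod>i = 0..<2*d. sy d F G x y i (p i)))"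
  proof (rule sum.cong[OF refl])
    fix p assume "p \<in> {p. p permutes {0..<2*d}}"
    then have "p i < 2*d" if "i < 2*d" for i using that permutes_in_image by fastforce
    then show "of_int (sign p) * (\<Prod>i = 0..<2*d. SM d F G x y $$ (i, p i)) =
        of_int (sign p) * (\<Prod>i = 0..<2*d. sy d F G x y i (p i))"
      by (auto simp: SM_def intro!: prod.cong)
  qed
  finally show ?thesis .
qed

lemma RR_poly1: "polyfun (\<lambda>y. RR d F G 1 y)"
  unfolding RR_expand sy_def
  by (intro polyfun_sum polyfun_mult polyfun_prod polyfun_if cf_poly1 polyfun_const)

lemma RR_poly2: "polyfun (\<lambda>x. RR d F G x 1)"
  unfolding RR_expand sy_def
  by (intro polyfun_sum polyfun_mult polyfun_prod polyfun_if cf_poly2 polyfun_const)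

definition ee :: "nat \<Rightarrow> nat \<Rightarrow> nat \<Rightarrow> int" where
  "ee d i j = (if i < d then int i + int d else int i) - int j"

lemma sy_hom: "sy d F G (l*x) (l*y) i j = l powi (ee d i j) * sy d F G x y i j"
proof (cases "i < d")
  case True
  show ?thesis
  proof (cases "i \<le> j \<and> j - i \<le> d")
    case c: True
    have "ee d i j = int (d - (j - i))" using True c by (auto simp: ee_def of_nat_diff)
    then have e: "l powi (ee d i j) = l ^ (d - (j - i))" by (simp add: power_int_of_nat)
    have "sy d F G (l*x) (l*y) i j = cf d F (j - i) (l*x) (l*y)" "sy d F G x y i j = cf d F (j - i) x y"
      using True c by (simp_all add: sy_def)
    then show ?thesis using e cf_hom by metis
  next
    case False
    then show ?thesis using True by (auto simp: sy_def)
  qed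
next
  case False
  show ?thesis
  proof (cases "i - d \<le> j \<and> j - (i - d) \<le> d")
    case c: True
    have "ee d i j = int (d - (j - (i - d)))" using False c by (auto simp: ee_def of_nat_diff)
    then have e: "l powi (ee d i j) = l ^ (d - (j - (i - d)))" by (simp add: power_int_of_nat)
    have "sy d F G (l*x) (l*y) i j = cf d G (j - (i - d)) (l*x) (l*y)" "sy d F G x y i j = cf d G (j - (i - d)) x y"
      using False c unfolding sy_def by (simp_all only: if_False if_True, simp_all)
    then show ?thesis using e cf_hom by metis
  next
    case c: False
    have "sy d F G (l*x) (l*y) i j = 0" "sy d F G x y i j = 0" using c False unfolding sy_def by auto
    then show ?thesis by simp
  qed
qed

lemma prod_powi: "(l::complex) \<noteq> 0 \<Longrightarrow> (\<Prod>i\<in>A. l powi f i) = l powi (\<Sum>i\<in>A. f i)"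
proof (induction A rule: infinite_finite_induct)
  case (insert x F) then show ?case by (simp add: power_int_add[of l])
qed auto

lemma ee_sum: assumes "p permutes {0..<2*d}"
  shows "(\<Sum>i = 0..<2*d. ee d i (p i)) = int (d * d)"
proof -
  have "(\<Sum>i = 0..<2*d. ee d i (p i)) = (\<Sum>i = 0..<2*d. (if i < d then int i + int d else int i)) - (\<Sum>i = 0..<2*d. int (p i))"
    unfolding ee_def by (simp add: sum_subtractf)
  also have "(\<Sum>i = 0..<2*d. int (p i)) = (\<Sum>i = 0..<2*d. int i)"
    using sum.permute[OF assms, of int] by (simp add: comp_def)
  also have "(\<Sum>i = 0..<2*d. (if i < d then int i + int d else int i)) = (\<Sum>i = 0..<2*d. int i) + (\<Sum>i = 0..<2*d. (if i < d then int d else 0))"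
    by (auto simp: sum.distrib[symmetric] intro!: sum.cong)
  also have "(\<Sum>i = 0..<2*d. (if i < d then int d else 0)) = (\<Sum>i \<in> {0..<d}. int d)"
  proof -
    have "{0..<2*d} \<inter> {x. x < d} = {0..<d}" by auto
    then show ?thesis by (subst sum.If_cases) auto
  qed
  finally show ?thesis by simp
qed

lemma RR_hom: assumes "l \<noteq> 0" shows "RR d F G (l*x) (l*y) = l ^ (d*d) * RR d F G x y"
proof -
  have "RR d F G (l*x) (l*y) = (\<Sum>p | p permutes {0..<2*d}.
        l ^ (d*d) * (of_int (sign p) * (\<Prod>i = 0..<2*d. sy d F G x y i (p i))))"
    unfolding RR_expand
  proof (rule sum.cong[OF refl])
    fix p assume "p \<in> {p. p permutes {0..<2*d}}"
    then have pp: "p permutes {0..<2*d}" by simp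
    have "(\<Prod>i = 0..<2*d. sy d F G (l*x) (l*y) i (p i)) = (\<Prod>i = 0..<2*d. l powi ee d i (p i)) * (\<Prod>i = 0..<2*d. sy d F G x y i (p i))"
      by (simp add: sy_hom prod.distrib)
    also have "(\<Prod>i = 0..<2*d. l powi ee d i (p i)) = l ^ (d*d)"
      using prod_powi[OF assms, of "\<lambda>i. ee d i (p i)" "{0..<2*d}"] ee_sum[OF pp] power_int_of_nat[of l "d*d"] by simp
    finally show "of_int (sign p) * (\<Prod>i = 0..<2*d. sy d F G (l*x) (l*y) i (p i)) = l ^ (d*d) * (of_int (sign p) * (\<Prod>i = 0..<2*d. sy d F G x y i (p i)))"
      by simp
  qed
  also have "\<dots> = l ^ (d*d) * RR d F G x y" unfolding RR_expand sum_distrib_left ..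
  finally show ?thesis .
qed

lemma sum_shift_delta:
  fixes d i j :: nat
  shows "(\<Sum>k\<le>d. if i + k = j then c k else (0::'a::comm_monoid_add)) = (if i \<le> j \<and> j - i \<le> d then c (j - i) else 0)"
proof (cases "i \<le> j")
  case True
  have e: "\<And>k. (i + k = j) = (k = j - i)" using True by auto
  have "(\<Sum>k\<le>d. if i + k = j then c k else 0) = (\<Sum>k\<le>d. if k = j - i then c k else 0)"
    by (simp only: e)
  then show ?thesis using True by (simp add: sum.delta)
next
  case False
  then show ?thesis by (intro trans[OF sum.neutral]) auto
qed

lemma no_common_root_coprime:
  fixes p q :: "complex poly"
  assumes "q \<noteq> 0" "\<not>(\<exists>t. poly p t = 0 \<and> poly q t = 0)"
  shows "coprime p q"
proof -
  let ?g = "gcd p q"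
  have g0: "?g \<noteq> 0" using assms(1) by simp
  have "degree ?g = 0"
  proof (rule ccontr)
    assume "degree ?g \<noteq> 0"
    then have "\<not> constant (poly ?g)" by (simp add: constant_degree)
    then obtain t where "poly ?g t = 0" using fundamental_theorem_of_algebra by blast
    then have "[:-t,1:] dvd ?g" using poly_eq_0_iff_dvd by blast
    then have "[:-t,1:] dvd p" "[:-t,1:] dvd q" by (auto intro: dvd_trans)
    then show False using assms(2) poly_eq_0_iff_dvd by blast
  qed
  then have "is_unit ?g" using is_unit_iff_degree[OF g0] by simp
  then show ?thesis using is_unit_gcd by blast
qed

lemma RR_zero_root:
  assumes d: "d \<ge> 1" and G0: "G (0,0,d) \<noteq> 0" and R: "RR d F G x y = 0"
  shows "\<exists>t. heval d F (x,y,t) = 0 \<and> heval d G (x,y,t) = 0"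
proof -
  define pF where "pF = (\<Sum>k\<le>d. monom (cf d F k x y) k)"
  define pG where "pG = (\<Sum>k\<le>d. monom (cf d G k x y) k)"
  have polyF: "poly pF t = heval d F (x,y,t)" for t unfolding pF_def heval_cf by (simp add: poly_sum poly_monom)
  have polyG: "poly pG t = heval d G (x,y,t)" for t unfolding pG_def heval_cf by (simp add: poly_sum poly_monom)
  have coeffF: "coeff pF j = (if j \<le> d then cf d F j x y else 0)" for j
    unfolding pF_def by (simp add: coeff_sum coeff_monom sum.delta)
  have coeffG: "coeff pG j = (if j \<le> d then cf d G j x y else 0)" for j
    unfolding pG_def by (simp add: coeff_sum coeff_monom sum.delta)
  have "degree pG \<le> d" by (rule degree_le) (simp add: coeffG)
  moreover have "coeff pG d \<noteq> 0" using G0 by (simp add: coeffG cf_top)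
  then have "d \<le> degree pG" by (rule le_degree)
  ultimately have degG: "degree pG = d" by simp
  then have pG0: "pG \<noteq> 0" using d by auto
  have car: "SM d F G x y \<in> carrier_mat (2*d) (2*d)" by (simp add: SM_def)
  have "Determinant.det (transpose_mat (SM d F G x y)) = 0"
    using det_transpose[OF car] R by (simp add: RR_def)
  then obtain v where v: "v \<in> carrier_vec (2*d)" "v \<noteq> 0\<^sub>v (2*d)"
    "transpose_mat (SM d F G x y) *\<^sub>v v = 0\<^sub>v (2*d)"
    using det_0_iff_vec_prod_zero[of "transpose_mat (SM d F G x y)" "2*d"] car by auto
  have kern: "(\<Sum>i\<in>{0..<2*d}. sy d F G x y i j * v $ i) = 0" for j
  proof (cases "j < 2*d")
    case True
    have "(transpose_mat (SM d F G x y) *\<^sub>v v) $ j = 0" using v(3) True by simp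
    moreover have "(transpose_mat (SM d F G x y) *\<^sub>v v) $ j = (\<Sum>i\<in>{0..<2*d}. sy d F G x y i j * v $ i)"
      using True v(1) by (auto simp: SM_def scalar_prod_def intro!: sum.cong)
    ultimately show ?thesis by simp
  next
    case False
    then have "sy d F G x y i j = 0" if "i < 2*d" for i using that by (auto simp: sy_def)
    then show ?thesis by simp
  qed
  define A where "A = (\<Sum>i<d. monom (v $ i) i)"
  define B where "B = (\<Sum>i<d. monom (v $ (d+i)) i)"
  have coeffA: "coeff A i = (if i < d then v $ i else 0)" for i
    unfolding A_def by (simp add: coeff_sum coeff_monom sum.delta)
  have coeffB: "coeff B i = (if i < d then v $ (d+i) else 0)" for i
    unfolding B_def by (simp add: coeff_sum coeff_monom sum.delta)
  have cAF: "coeff (A * pF) j = (\<Sum>i\<in>{0..<d}. sy d F G x y i j * v $ i)" for j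
  proof -
    have "A * pF = (\<Sum>i<d. \<Sum>k\<le>d. monom (v $ i * cf d F k x y) (i + k))"
      unfolding A_def pF_def by (simp add: sum_distrib_right) (simp add: sum_distrib_left mult_monom)
    then have "coeff (A * pF) j = (\<Sum>i<d. \<Sum>k\<le>d. if i + k = j then v $ i * cf d F k x y else 0)"
      by (simp add: coeff_sum coeff_monom)
    also have "\<dots> = (\<Sum>i<d. if i \<le> j \<and> j - i \<le> d then v $ i * cf d F (j - i) x y else 0)"
      by (simp only: sum_shift_delta)
    also have "\<dots> = (\<Sum>i\<in>{0..<d}. sy d F G x y i j * v $ i)"
      by (auto simp: sy_def atLeast0LessThan intro!: sum.cong)
    finally show ?thesis .
  qed
  have cBG: "coeff (B * pG) j = (\<Sum>i\<in>{d..<2*d}. sy d F G x y i j * v $ i)" for j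
  proof -
    have "B * pG = (\<Sum>i<d. \<Sum>k\<le>d. monom (v $ (d+i) * cf d G k x y) (i + k))"
      unfolding B_def pG_def by (simp add: sum_distrib_right) (simp add: sum_distrib_left mult_monom)
    then have "coeff (B * pG) j = (\<Sum>i<d. \<Sum>k\<le>d. if i + k = j then v $ (d+i) * cf d G k x y else 0)"
      by (simp add: coeff_sum coeff_monom)
    also have "\<dots> = (\<Sum>i<d. if i \<le> j \<and> j - i \<le> d then v $ (d+i) * cf d G (j - i) x y else 0)"
      by (simp only: sum_shift_delta)
    also have "\<dots> = (\<Sum>i\<in>{0..<d}. sy d F G x y (i+d) j * v $ (i+d))"
      by (auto simp: sy_def atLeast0LessThan add.commute intro!: sum.cong)
    also have "\<dots> = (\<Sum>i\<in>{0+d..<d+d}. sy d F G x y i j * v $ i)"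
      by (rule sum.shift_bounds_nat_ivl[symmetric])
    finally show ?thesis by (simp add: mult_2)
  qed
  have eq0: "A * pF + B * pG = 0"
  proof (rule poly_eqI)
    fix j
    have "coeff (A * pF + B * pG) j = (\<Sum>i\<in>{0..<d}. sy d F G x y i j * v $ i) + (\<Sum>i\<in>{d..<2*d}. sy d F G x y i j * v $ i)"
      by (simp add: cAF cBG)
    also have "\<dots> = (\<Sum>i\<in>{0..<2*d}. sy d F G x y i j * v $ i)"
      by (rule sum.atLeastLessThan_concat) auto
    finally show "coeff (A * pF + B * pG) j = coeff 0 j" using kern by simp
  qed
  have AB: "A \<noteq> 0 \<or> B \<noteq> 0"
  proof -
    obtain i where i: "i < 2*d" "v $ i \<noteq> 0"
      using v(1,2) by (metis carrier_vecD eq_vecI index_zero_vec(1,2))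
    show ?thesis
    proof (cases "i < d")
      case True then have "coeff A i \<noteq> 0" using i by (simp add: coeffA)
      then show ?thesis by auto
    next
      case False then have "coeff B (i - d) \<noteq> 0" using i by (simp add: coeffB)
      then show ?thesis by auto
    qed
  qed
  have degA: "degree A < d"
  proof -
    have "degree A \<le> d - 1" by (rule degree_le) (auto simp: coeffA)
    then show ?thesis using d by simp
  qed
  show ?thesis
  proof (rule ccontr)
    assume "\<not> ?thesis"
    then have "\<not>(\<exists>t. poly pF t = 0 \<and> poly pG t = 0)" by (simp add: polyF polyG)
    then have cop: "coprime pG pF" using no_common_root_coprime[OF pG0] by (simp add: coprime_commute)
    have "pG dvd A * pF" using eq0 by (metis add_eq_0_iff2 dvd_minus_iff dvd_triv_right mult.commute)
    then have "pG dvd A" using cop by (simp add: coprime_dvd_mult_left_iff)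
    show False
    proof (cases "A = 0")
      case True
      then have "B = 0" using eq0 pG0 by simp
      then show False using AB True by simp
    next
      case False
      then have "degree pG \<le> degree A" using \<open>pG dvd A\<close> dvd_imp_degree_le by blast
      then show False using degA degG by simp
    qed
  qed
qed

lemma common_zero_main:
  assumes d: "d \<ge> 1" and G0: "G (0,0,d) \<noteq> 0"
  shows "\<exists>v. v \<noteq> (0,0,0) \<and> heval d F v = 0 \<and> heval d G v = 0"
proof (cases "\<exists>y. RR d F G 1 y = 0")
  case True
  then obtain y where "RR d F G 1 y = 0" by blast
  from RR_zero_root[OF d G0 this] obtain t where "heval d F (1,y,t) = 0" "heval d G (1,y,t) = 0" by blast
  then show ?thesis by (intro exI[of _ "(1,y,t)"]) simp
next
  case False
  obtain p where p: "\<And>y. RR d F G 1 y = poly p y" using RR_poly1 unfolding polyfun_def by blast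
  have "constant (poly p)"
  proof (rule ccontr)
    assume "\<not> constant (poly p)"
    then obtain y where "poly p y = 0" using fundamental_theorem_of_algebra by blast
    then show False using False p by metis
  qed
  then have cst: "RR d F G 1 y = RR d F G 1 0" for y using p unfolding constant_def by metis
  define c where "c = RR d F G 1 0"
  have c0: "c \<noteq> 0" using False c_def by auto
  obtain q where q: "\<And>x. RR d F G x 1 = poly q x" using RR_poly2 unfolding polyfun_def by blast
  have qx: "poly q x = c * x ^ (d*d)" if "x \<noteq> 0" for x
  proof -
    have "RR d F G x 1 = RR d F G (x*1) (x*(1/x))" using that by simp
    also have "\<dots> = x ^ (d*d) * RR d F G 1 (1/x)" by (rule RR_hom[OF that])
    also have "\<dots> = x ^ (d*d) * c" using cst c_def by simp
    finally show ?thesis using q by (simp add: mult.commute)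
  qed
  define r where "r = q - monom c (d*d)"
  have rx: "poly r x = 0" if "x \<noteq> 0" for x using qx[OF that] by (simp add: r_def poly_monom)
  have "r = 0"
  proof (rule ccontr)
    assume "r \<noteq> 0"
    then have "finite {x. poly r x = 0}" by (rule poly_roots_finite)
    moreover have "UNIV - {0} \<subseteq> {x. poly r x = 0}" using rx by auto
    ultimately have "finite (UNIV - {0::complex})" by (rule finite_subset[rotated])
    then show False by (simp add: infinite_UNIV_char_0)
  qed
  then have "poly q 0 = poly (monom c (d*d)) 0" unfolding r_def by simp
  also have "\<dots> = 0" using d by (simp add: poly_monom)
  finally have "RR d F G 0 1 = 0" using q by simp
  from RR_zero_root[OF d G0 this] obtain t where "heval d F (0,1,t) = 0" "heval d G (0,1,t) = 0" by blast
  then show ?thesis by (intro exI[of _ "(0,1,t)"]) simp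
qed

lemma heval_001: "heval d F (0,0,1) = F (0,0,d)"
proof -
  have "heval d F (0,0,1) = (\<Sum>m\<in>hmonos d. if m = (0,0,d) then F m else 0)"
    unfolding heval_def by (auto simp: hmonos_def intro!: sum.cong)
  also have "\<dots> = F (0,0,d)" by (simp add: hmonos_finite) (simp add: hmonos_def)
  finally show ?thesis .
qed

lemma common_zero:
  assumes d: "d \<ge> 1"
  shows "\<exists>v. v \<noteq> (0,0,0) \<and> heval d F v = 0 \<and> heval d G v = 0"
proof (cases "G (0,0,d) \<noteq> 0")
  case True then show ?thesis using common_zero_main[OF d] by blast
next
  case G: False
  show ?thesis
  proof (cases "F (0,0,d) \<noteq> 0")
    case True then show ?thesis using common_zero_main[OF d, of F G] by blast
  next
    case False
    then show ?thesis using G heval_001[of d F] heval_001[of d G]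
      by (intro exI[of _ "(0,0,1)"]) simp
  qed
qed



lemma deriv_isolated:
  fixes f :: "'a::euclidean_space \<Rightarrow> 'b::euclidean_space"
  assumes fd: "(f has_derivative D) (at u)" and inj0: "\<And>h. D h = 0 \<Longrightarrow> h = 0"
  shows "\<exists>\<delta>>0. \<forall>w. norm (w - u) < \<delta> \<and> f w = f u \<longrightarrow> w = u"
proof -
  have bl: "bounded_linear D" using fd has_derivative_bounded_linear by blast
  then have lin: "linear D" by (rule bounded_linear.linear)
  have "inj D" using linear_injective_0[OF lin] inj0 by blast
  then obtain B where B: "B > 0" "\<And>x. B * norm x \<le> norm (D x)"
    using linear_inj_bounded_below_pos[OF lin] by blast
  obtain \<delta> where \<delta>: "\<delta> > 0" "\<And>y. norm (y - u) < \<delta> \<Longrightarrow> norm (f y - f u - D (y - u)) \<le> (B/2) * norm (y - u)"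
    using fd[unfolded has_derivative_at_alt] B(1) by (metis half_gt_zero)
  show ?thesis
  proof (intro exI conjI allI impI)
    fix w assume w: "norm (w - u) < \<delta> \<and> f w = f u"
    then have "norm (D (w - u)) \<le> (B/2) * norm (w - u)" using \<delta>(2)[of w] by (simp add: norm_minus_commute)
    moreover have "B * norm (w - u) \<le> norm (D (w - u))" by (rule B(2))
    ultimately have "(B/2) * norm (w - u) \<le> 0" by linarith
    then have "norm (w - u) \<le> 0" using B(1) by (simp add: mult_le_0_iff)
    then have "norm (w - u) = 0" by simp
    then show "w = u" by simp
  qed (fact \<delta>(1))
qed

lemma heval_alt: "heval d F w = (\<Sum>m\<in>hmonos d. F m * fst w ^ fst m * fst (snd w) ^ fst (snd m) * snd (snd w) ^ snd (snd m))"
  by (cases w) (simp add: heval_def case_prod_unfold)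

lemma hdx_alt: "hdx d F w = (\<Sum>m\<in>hmonos d. F m * of_nat (fst m) * fst w ^ (fst m - 1) * fst (snd w) ^ fst (snd m) * snd (snd w) ^ snd (snd m))"
  by (cases w) (simp add: hdx_def case_prod_unfold)

lemma hdy_alt: "hdy d F w = (\<Sum>m\<in>hmonos d. F m * of_nat (fst (snd m)) * fst w ^ fst m * fst (snd w) ^ (fst (snd m) - 1) * snd (snd w) ^ snd (snd m))"
  by (cases w) (simp add: hdy_def case_prod_unfold)

lemma hdz_alt: "hdz d F w = (\<Sum>m\<in>hmonos d. F m * of_nat (snd (snd m)) * fst w ^ fst m * fst (snd w) ^ fst (snd m) * snd (snd w) ^ (snd (snd m) - 1))"
  by (cases w) (simp add: hdz_def case_prod_unfold)

lemma mono_deriv: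
  "((\<lambda>w::cvec3. c * fst w ^ a * fst (snd w) ^ b * snd (snd w) ^ e) has_derivative
    (\<lambda>h. c * of_nat a * fst u ^ (a - 1) * fst (snd u) ^ b * snd (snd u) ^ e * fst h
       + c * of_nat b * fst u ^ a * fst (snd u) ^ (b - 1) * snd (snd u) ^ e * fst (snd h)
       + c * of_nat e * fst u ^ a * fst (snd u) ^ b * snd (snd u) ^ (e - 1) * snd (snd h))) (at u)"
  by (auto intro!: derivative_eq_intros simp: algebra_simps)

lemma heval_deriv:
  "(heval d F has_derivative (\<lambda>h. hdx d F u * fst h + hdy d F u * fst (snd h) + hdz d F u * snd (snd h))) (at u)"
proof -
  have "((\<lambda>w. \<Sum>m\<in>hmonos d. F m * fst w ^ fst m * fst (snd w) ^ fst (snd m) * snd (snd w) ^ snd (snd m)) has_derivative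
    (\<lambda>h. \<Sum>m\<in>hmonos d. F m * of_nat (fst m) * fst u ^ (fst m - 1) * fst (snd u) ^ fst (snd m) * snd (snd u) ^ snd (snd m) * fst h
       + F m * of_nat (fst (snd m)) * fst u ^ fst m * fst (snd u) ^ (fst (snd m) - 1) * snd (snd u) ^ snd (snd m) * fst (snd h)
       + F m * of_nat (snd (snd m)) * fst u ^ fst m * fst (snd u) ^ fst (snd m) * snd (snd u) ^ (snd (snd m) - 1) * snd (snd h))) (at u)"
    by (rule has_derivative_sum) (rule mono_deriv)
  moreover have "heval d F = (\<lambda>w. \<Sum>m\<in>hmonos d. F m * fst w ^ fst m * fst (snd w) ^ fst (snd m) * snd (snd w) ^ snd (snd m))"
    by (rule ext) (rule heval_alt)
  moreover have "(\<lambda>h. \<Sum>m\<in>hmonos d. F m * of_nat (fst m) * fst u ^ (fst m - 1) * fst (snd u) ^ fst (snd m) * snd (snd u) ^ snd (snd m) * fst h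
       + F m * of_nat (fst (snd m)) * fst u ^ fst m * fst (snd u) ^ (fst (snd m) - 1) * snd (snd u) ^ snd (snd m) * fst (snd h)
       + F m * of_nat (snd (snd m)) * fst u ^ fst m * fst (snd u) ^ fst (snd m) * snd (snd u) ^ (snd (snd m) - 1) * snd (snd h))
     = (\<lambda>h. hdx d F u * fst h + hdy d F u * fst (snd h) + hdz d F u * snd (snd h))"
    by (rule ext) (simp only: hdx_alt hdy_alt hdz_alt sum_distrib_right sum.distrib)
  ultimately show ?thesis by simp
qed

lemma euler_term: "(x::complex) * (of_nat a * x ^ (a - 1)) = of_nat a * x ^ a"
  by (cases a) auto

lemma euler_mono:
  fixes x y z c :: complex
  shows "x * (c * of_nat a * x ^ (a - 1) * y ^ b * z ^ e) + y * (c * of_nat b * x ^ a * y ^ (b - 1) * z ^ e)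
     + z * (c * of_nat e * x ^ a * y ^ b * z ^ (e - 1)) = c * of_nat (a + b + e) * x ^ a * y ^ b * z ^ e"
proof -
  have 1: "x * (c * of_nat a * x ^ (a - 1) * y ^ b * z ^ e) = c * y ^ b * z ^ e * (x * (of_nat a * x ^ (a - 1)))"
    by (simp only: ac_simps)
  have 2: "y * (c * of_nat b * x ^ a * y ^ (b - 1) * z ^ e) = c * x ^ a * z ^ e * (y * (of_nat b * y ^ (b - 1)))"
    by (simp only: ac_simps)
  have 3: "z * (c * of_nat e * x ^ a * y ^ b * z ^ (e - 1)) = c * x ^ a * y ^ b * (z * (of_nat e * z ^ (e - 1)))"
    by (simp only: ac_simps)
  show ?thesis unfolding 1 2 3 euler_term by (simp add: algebra_simps)
qed

lemma euler: "fst u * hdx d F u + fst (snd u) * hdy d F u + snd (snd u) * hdz d F u = of_nat d * heval d F u"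
proof -
  have "fst u * hdx d F u + fst (snd u) * hdy d F u + snd (snd u) * hdz d F u =
    (\<Sum>m\<in>hmonos d. F m * of_nat (fst m + fst (snd m) + snd (snd m)) * fst u ^ fst m * fst (snd u) ^ fst (snd m) * snd (snd u) ^ snd (snd m))"
    unfolding hdx_alt hdy_alt hdz_alt sum_distrib_left sum.distrib[symmetric]
    by (rule sum.cong[OF refl]) (rule euler_mono)
  also have "\<dots> = of_nat d * heval d F u"
    unfolding heval_alt sum_distrib_left
    by (rule sum.cong[OF refl]) (auto simp: hmonos_def algebra_simps)
  finally show ?thesis .
qed

lemma cross_rel:
  fixes a1 a2 a3 b1 b2 b3 w1 w2 w3 :: complex
  assumes "a1*w1 + a2*w2 + a3*w3 = 0" "b1*w1 + b2*w2 + b3*w3 = 0"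
  shows "w1 * (a3*b1 - a1*b3) = w2 * (a2*b3 - a3*b2)"
proof -
  have "w1 * (a3*b1 - a1*b3) - w2 * (a2*b3 - a3*b2) = a3*(b1*w1 + b2*w2 + b3*w3) - b3*(a1*w1 + a2*w2 + a3*w3)"
    by (simp add: algebra_simps)
  then show ?thesis using assms by simp
qed

lemma core_c1:
  fixes a1 a2 a3 b1 b2 b3 u1 u2 u3 h1 h2 h3 :: complex
  assumes au: "a1*u1 + a2*u2 + a3*u3 = 0" and bu: "b1*u1 + b2*u2 + b3*u3 = 0"
    and ah: "a1*h1 + a2*h2 + a3*h3 = 0" and bh: "b1*h1 + b2*h2 + b3*h3 = 0"
    and uh: "cnj u1 * h1 + cnj u2 * h2 + cnj u3 * h3 = 0"
    and uu: "cnj u1 * u1 + cnj u2 * u2 + cnj u3 * u3 = 1"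
    and c1: "a2*b3 - a3*b2 \<noteq> 0"
  shows "h1 = 0 \<and> h2 = 0 \<and> h3 = 0"
proof -
  define c1 where "c1 = a2*b3 - a3*b2"
  define c2 where "c2 = a3*b1 - a1*b3"
  define c3 where "c3 = a1*b2 - a2*b1"
  have ru1: "u1 * c2 = u2 * c1" unfolding c1_def c2_def by (rule cross_rel[OF au bu])
  have ru3: "u3 * c1 = u1 * c3" unfolding c1_def c3_def
    using cross_rel[of a3 u3 a1 u1 a2 u2 b3 b1 b2] au bu by (simp add: algebra_simps)
  have rh1: "h1 * c2 = h2 * c1" unfolding c1_def c2_def by (rule cross_rel[OF ah bh])
  have rh3: "h3 * c1 = h1 * c3" unfolding c1_def c3_def
    using cross_rel[of a3 h3 a1 h1 a2 h2 b3 b1 b2] ah bh by (simp add: algebra_simps)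
  define s where "s = cnj u1 * c1 + cnj u2 * c2 + cnj u3 * c3"
  have "c1 * (cnj u1 * u1 + cnj u2 * u2 + cnj u3 * u3) - u1 * s = cnj u2 * (c1*u2 - u1*c2) + cnj u3 * (c1*u3 - u1*c3)"
    unfolding s_def by (simp add: algebra_simps)
  also have "\<dots> = 0" using ru1 ru3 by (simp add: algebra_simps)
  finally have "c1 = u1 * s" using uu by simp
  then have s0: "s \<noteq> 0" using c1 c1_def by auto
  have "c1 * (cnj u1 * h1 + cnj u2 * h2 + cnj u3 * h3) - h1 * s = cnj u2 * (c1*h2 - h1*c2) + cnj u3 * (c1*h3 - h1*c3)"
    unfolding s_def by (simp add: algebra_simps)
  also have "\<dots> = 0" using rh1 rh3 by (simp add: algebra_simps)
  finally have "h1 * s = 0" using uh by simp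
  then have h1: "h1 = 0" using s0 by simp
  have "h2 * c1 = 0" using rh1 h1 by simp
  moreover have "h3 * c1 = 0" using rh3 h1 by simp
  ultimately show ?thesis using h1 c1 c1_def by simp
qed

lemma prop_b1:
  fixes a1 a2 a3 b1 b2 b3 :: complex
  assumes "b1 \<noteq> 0" "a3*b1 - a1*b3 = 0" "a1*b2 - a2*b1 = 0"
  shows "\<exists>c. a1 = c*b1 \<and> a2 = c*b2 \<and> a3 = c*b3"
  using assms by (intro exI[of _ "a1/b1"]) (auto simp: field_simps)

lemma transversal_inj:
  fixes a1 a2 a3 b1 b2 b3 u1 u2 u3 h1 h2 h3 :: complex
  assumes au: "a1*u1 + a2*u2 + a3*u3 = 0" and bu: "b1*u1 + b2*u2 + b3*u3 = 0"
    and ah: "a1*h1 + a2*h2 + a3*h3 = 0" and bh: "b1*h1 + b2*h2 + b3*h3 = 0"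
    and uh: "cnj u1 * h1 + cnj u2 * h2 + cnj u3 * h3 = 0"
    and uu: "cnj u1 * u1 + cnj u2 * u2 + cnj u3 * u3 = 1"
    and b0: "(b1, b2, b3) \<noteq> (0,0,0)"
    and np: "\<forall>c. (a1, a2, a3) \<noteq> (c*b1, c*b2, c*b3)"
  shows "h1 = 0 \<and> h2 = 0 \<and> h3 = 0"
proof -
  have "a2*b3 - a3*b2 \<noteq> 0 \<or> a3*b1 - a1*b3 \<noteq> 0 \<or> a1*b2 - a2*b1 \<noteq> 0"
  proof (rule ccontr)
    assume "\<not> ?thesis"
    then have z: "a2*b3 - a3*b2 = 0" "a3*b1 - a1*b3 = 0" "a1*b2 - a2*b1 = 0" by auto
    have "\<exists>c. a1 = c*b1 \<and> a2 = c*b2 \<and> a3 = c*b3"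
    proof -
      consider "b1 \<noteq> 0" | "b2 \<noteq> 0" | "b3 \<noteq> 0" using b0 by auto
      then show ?thesis
      proof cases
        case 1 then show ?thesis using prop_b1[of b1 a3 a1 b3 b2 a2] z by blast
      next
        case 2 then show ?thesis using prop_b1[of b2 a1 a2 b1 b3 a3] z by (metis)
      next
        case 3 then show ?thesis using prop_b1[of b3 a2 a3 b2 b1 a1] z by (metis)
      qed
    qed
    then show False using np by auto
  qed
  then consider "a2*b3 - a3*b2 \<noteq> 0" | "a3*b1 - a1*b3 \<noteq> 0" | "a1*b2 - a2*b1 \<noteq> 0" by blast
  then show ?thesis
  proof cases
    case 1 then show ?thesis using core_c1[OF au bu ah bh uh uu] by blast
  next
    case 2
    have "h2 = 0 \<and> h3 = 0 \<and> h1 = 0"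
      by (rule core_c1[of a2 u2 a3 u3 a1 u1 b2 b3 b1]) (use au bu ah bh uh uu 2 in \<open>simp_all add: algebra_simps\<close>)
    then show ?thesis by blast
  next
    case 3
    have "h3 = 0 \<and> h1 = 0 \<and> h2 = 0"
      by (rule core_c1[of a3 u3 a1 u1 a2 u2 b3 b1 b2]) (use au bu ah bh uh uu 3 in \<open>simp_all add: algebra_simps\<close>)
    then show ?thesis by blast
  qed
qed


definition Lf :: "cvec3 \<Rightarrow> cvec3 \<Rightarrow> complex" where
  "Lf u w = cnj (fst u) * fst w + cnj (fst (snd u)) * fst (snd w) + cnj (snd (snd u)) * snd (snd w)"

lemma norm3: "norm (w::cvec3) ^ 2 = cmod (fst w)^2 + cmod (fst (snd w))^2 + cmod (snd (snd w))^2"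
  by (cases w) (simp add: norm_Pair)

lemma cnj_mult_self: "cnj z * z = complex_of_real (cmod z ^ 2)"
  by (metis complex_norm_square mult.commute)

lemma Lf_self: "Lf u u = complex_of_real (norm u ^ 2)"
  unfolding Lf_def norm3 cnj_mult_self by simp

lemma Lf_scale: "Lf u (cscale c w) = c * Lf u w"
  by (cases w) (simp add: Lf_def cscale_def algebra_simps)

lemma cscale_cscale: "cscale a (cscale c w) = cscale (a*c) w"
  by (cases w) (simp add: cscale_def)

lemma cscale_1[simp]: "cscale 1 w = w"
  by (cases w) (simp add: cscale_def)

lemma norm_cscale: "norm (cscale c w) = cmod c * norm w"
proof -
  have "norm (cscale c w) ^ 2 = (cmod c * norm w) ^ 2"
    by (cases w) (simp add: cscale_def norm3 norm_mult power_mult_distrib algebra_simps)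
  then show ?thesis by (simp add: power2_eq_iff_nonneg)
qed

lemma Lf_deriv: "(Lf u has_derivative Lf u) (at w)"
  unfolding Lf_def[abs_def] by (auto intro!: derivative_eq_intros)

lemma local_iso:
  assumes nu: "norm u = 1" and Fu: "heval d F u = 0" and Gu: "heval d G u = 0"
   and gG: "hgrad d G u \<noteq> (0,0,0)" and np: "\<forall>c. hgrad d F u \<noteq> cscale c (hgrad d G u)"
  shows "\<exists>\<epsilon>>0. \<forall>w. norm (w - u) < \<epsilon> \<and> heval d F w = 0 \<and> heval d G w = 0 \<longrightarrow> (\<exists>c. w = cscale c u)"
proof -
  define \<Phi> where "\<Phi> = (\<lambda>w. (heval d F w, heval d G w, Lf u w))"
  define D where "D = (\<lambda>h. (hdx d F u * fst h + hdy d F u * fst (snd h) + hdz d F u * snd (snd h),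
      hdx d G u * fst h + hdy d G u * fst (snd h) + hdz d G u * snd (snd h), Lf u h))"
  have der: "(\<Phi> has_derivative D) (at u)" unfolding \<Phi>_def D_def
    by (intro has_derivative_Pair heval_deriv Lf_deriv)
  have Luu: "Lf u u = 1" using Lf_self[of u] nu by simp
  have inj: "h = 0" if "D h = 0" for h
  proof -
    obtain h1 h2 h3 where h: "h = (h1,h2,h3)" by (cases h) auto
    obtain u1 u2 u3 where u: "u = (u1,u2,u3)" by (cases u) auto
    have eF: "hdx d F u * u1 + hdy d F u * u2 + hdz d F u * u3 = 0"
      using euler[of u d F] Fu u by (simp add: mult.commute)
    have eG: "hdx d G u * u1 + hdy d G u * u2 + hdz d G u * u3 = 0"
      using euler[of u d G] Gu u by (simp add: mult.commute)
    have uu: "cnj u1 * u1 + cnj u2 * u2 + cnj u3 * u3 = 1" using Luu u by (simp add: Lf_def)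
    have b0: "(hdx d G u, hdy d G u, hdz d G u) \<noteq> (0,0,0)" using gG by (simp add: hgrad_def)
    have npc: "\<forall>c. (hdx d F u, hdy d F u, hdz d F u) \<noteq> (c * hdx d G u, c * hdy d G u, c * hdz d G u)"
      using np by (simp add: hgrad_def cscale_def)
    have "h1 = 0 \<and> h2 = 0 \<and> h3 = 0"
      by (rule transversal_inj[OF eF eG _ _ _ uu b0 npc]) (use that h u in \<open>simp_all add: D_def Lf_def zero_prod_def\<close>)
    then show ?thesis using h by (simp add: zero_prod_def)
  qed
  obtain \<delta> where \<delta>: "\<delta> > 0" "\<And>w. norm (w - u) < \<delta> \<and> \<Phi> w = \<Phi> u \<Longrightarrow> w = u"
    using deriv_isolated[OF der inj] by blast
  define N where "N = (\<lambda>w. cscale (1 / Lf u w) w)"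
  have contL: "isCont (Lf u) u" using Lf_deriv has_derivative_continuous by blast
  have contN: "isCont N u"
  proof -
    have "N = (\<lambda>w. (fst w / Lf u w, fst (snd w) / Lf u w, snd (snd w) / Lf u w))"
      unfolding N_def by (rule ext) (simp add: cscale_def case_prod_unfold)
    moreover have "isCont (\<lambda>w. (fst w / Lf u w, fst (snd w) / Lf u w, snd (snd w) / Lf u w)) u"
      using contL Luu by (intro continuous_intros) auto
    ultimately show ?thesis by simp
  qed
  have Nu: "N u = u" using Luu by (simp add: N_def)
  obtain e1 where e1: "e1 > 0" "\<And>w. dist w u < e1 \<Longrightarrow> dist (N w) (N u) < \<delta>"
    using contN[unfolded continuous_at_eps_delta] \<delta>(1) by blast
  obtain e2 where e2: "e2 > 0" "\<And>w. dist w u < e2 \<Longrightarrow> dist (Lf u w) (Lf u u) < 1"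
    using contL[unfolded continuous_at_eps_delta, rule_format, of 1] by auto
  show ?thesis
  proof (intro exI[of _ "min e1 e2"] conjI allI impI)
    show "min e1 e2 > 0" using e1 e2 by simp
    fix w assume w: "norm (w - u) < min e1 e2 \<and> heval d F w = 0 \<and> heval d G w = 0"
    then have dw: "dist w u < e1" "dist w u < e2" by (simp_all add: dist_norm)
    define l where "l = Lf u w"
    have l0: "l \<noteq> 0"
    proof
      assume "l = 0"
      then show False using e2(2)[OF dw(2)] Luu l_def by simp
    qed
    have "\<Phi> (N w) = \<Phi> u"
      using w l0 Fu Gu Luu unfolding \<Phi>_def N_def l_def[symmetric]
      by (simp add: heval_scale Lf_scale l_def)
    moreover have "norm (N w - u) < \<delta>" using e1(2)[OF dw(1)] Nu by (simp add: dist_norm)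
    ultimately have "N w = u" using \<delta>(2) by blast
    then have "cscale l (N w) = cscale l u" by simp
    then have "w = cscale l u" using l0 by (simp add: N_def l_def[symmetric] cscale_cscale)
    then show "\<exists>c. w = cscale c u" by blast
  qed
qed


lemma proj_point_self: "v \<in> proj_point v"
  unfolding proj_point_def by (rule CollectI, rule exI[of _ 1]) simp

lemma proj_point_scale: assumes "c \<noteq> 0" shows "proj_point (cscale c v) = proj_point v"
proof
  show "proj_point (cscale c v) \<subseteq> proj_point v"
    unfolding proj_point_def using assms by (auto simp: cscale_cscale)
  show "proj_point v \<subseteq> proj_point (cscale c v)"
  proof
    fix w assume "w \<in> proj_point v"
    then obtain a where a: "a \<noteq> 0" "w = cscale a v" unfolding proj_point_def by auto
    then have "w = cscale (a / c) (cscale c v)" using assms by (simp add: cscale_cscale)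
    then show "w \<in> proj_point (cscale c v)" unfolding proj_point_def using a assms by auto
  qed
qed

lemma proj_point_eq: assumes "proj_point v = proj_point w" shows "\<exists>c. c \<noteq> 0 \<and> v = cscale c w"
proof -
  have "v \<in> proj_point w" using proj_point_self[of v] assms by simp
  then show ?thesis unfolding proj_point_def by auto
qed

lemma heval_cont: "continuous_on UNIV (heval d F)"
  by (rule continuous_at_imp_continuous_on) (meson has_derivative_continuous heval_deriv)

lemma zero_locus_mem: assumes "p \<in> zero_locus d F" "p = proj_point w" "w \<noteq> (0,0,0)"
  shows "heval d F w = 0"
proof -
  obtain v where v: "p = proj_point v" "v \<noteq> (0,0,0)" "heval d F v = 0" using assms(1) unfolding zero_locus_def by auto
  obtain c where c: "c \<noteq> 0" "w = cscale c v" using proj_point_eq[of w v] v(1) assms(2) by auto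
  show ?thesis using c v by (simp add: heval_scale)
qed

lemma finite_common:
  assumes smG: "\<forall>v. v \<noteq> (0,0,0) \<and> heval d G v = 0 \<longrightarrow> hgrad d G v \<noteq> (0,0,0)"
   and tr: "\<forall>v. v \<noteq> (0,0,0) \<and> heval d F v = 0 \<and> heval d G v = 0 \<longrightarrow> (\<forall>c. hgrad d F v \<noteq> cscale c (hgrad d G v))"
  shows "finite (zero_locus d F \<inter> zero_locus d G)"
proof (rule ccontr)
  define P where "P = zero_locus d F \<inter> zero_locus d G"
  assume "infinite (zero_locus d F \<inter> zero_locus d G)"
  then have infP: "infinite P" by (simp add: P_def)
  define K where "K = {w::cvec3. norm w = 1 \<and> heval d F w = 0 \<and> heval d G w = 0}"
  have rep: "\<exists>w. w \<in> K \<and> p = proj_point w" if pP: "p \<in> P" for p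
  proof -
    obtain v where v: "p = proj_point v" "v \<noteq> (0,0,0)" using pP unfolding P_def zero_locus_def by blast
    have Fv: "heval d F v = 0" "heval d G v = 0" using zero_locus_mem v pP unfolding P_def by blast+
    have nv: "norm v \<noteq> 0" using v(2) by (simp add: zero_prod_def)
    define w where "w = cscale (complex_of_real (1 / norm v)) v"
    have "cmod (complex_of_real (1 / norm v)) = 1 / norm v" by (simp add: norm_divide)
    then have "norm w = 1" unfolding w_def norm_cscale using nv by simp
    moreover have "heval d F w = 0" "heval d G w = 0" unfolding w_def heval_scale using Fv by simp_all
    moreover have "p = proj_point w" unfolding w_def using proj_point_scale nv v(1) by simp
    ultimately show ?thesis unfolding K_def by blast
  qed
  obtain r where r: "\<And>p. p \<in> P \<Longrightarrow> r p \<in> K \<and> p = proj_point (r p)"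
    using rep by metis
  have "inj_on r P" by (rule inj_onI) (metis r)
  then have infR: "infinite (r ` P)" using infP finite_imageD by blast
  have RK: "r ` P \<subseteq> K" using r by auto
  have "compact K"
  proof -
    have "K = sphere 0 1 \<inter> ({w. heval d F w = 0} \<inter> {w. heval d G w = 0})"
      unfolding K_def by auto
    moreover have "closed ({w. heval d F w = 0} \<inter> {w. heval d G w = 0})"
      by (intro closed_Int closed_Collect_eq heval_cont continuous_on_const)
    ultimately show ?thesis by (simp add: compact_Int_closed)
  qed
  then obtain u where u: "u \<in> K" "u islimpt (r ` P)"
    using compact_eq_Bolzano_Weierstrass infR RK by metis
  have u0: "u \<noteq> (0,0,0)" using u(1) by (auto simp: K_def zero_prod_def[symmetric])
  obtain \<epsilon> where \<epsilon>: "\<epsilon> > 0" "\<And>w. norm (w - u) < \<epsilon> \<and> heval d F w = 0 \<and> heval d G w = 0 \<Longrightarrow> \<exists>c. w = cscale c u"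
    using local_iso[of u d F G] u(1) u0 smG tr unfolding K_def by blast
  have infB: "infinite (r ` P \<inter> ball u \<epsilon>)" using u(2) \<epsilon>(1) islimpt_eq_infinite_ball by blast
  then obtain x1 where x1: "x1 \<in> r ` P \<inter> ball u \<epsilon>" by (metis finite.emptyI equals0I)
  have "infinite (r ` P \<inter> ball u \<epsilon> - {x1})" using infB by simp
  then obtain x2 where x2: "x2 \<in> r ` P \<inter> ball u \<epsilon> - {x1}" by (metis finite.emptyI equals0I)
  have same: "proj_point x = proj_point u" if "x \<in> r ` P \<inter> ball u \<epsilon>" for x
  proof -
    have xK: "x \<in> K" using that RK by auto
    have "norm (x - u) < \<epsilon>" using that by (simp add: dist_norm norm_minus_commute)
    then obtain c where c: "x = cscale c u" using \<epsilon>(2) xK unfolding K_def by blast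
    have "c \<noteq> 0" using xK c unfolding K_def by (auto simp: norm_cscale)
    then show ?thesis using c proj_point_scale by simp
  qed
  obtain p1 where p1: "p1 \<in> P" "x1 = r p1" using x1 by auto
  obtain p2 where p2: "p2 \<in> P" "x2 = r p2" using x2 by auto
  have "p1 = p2" using r[OF p1(1)] r[OF p2(1)] same[of x1] same[of x2] x1 x2 p1 p2 by auto
  then show False using p1 p2 x2 by simp
qed



lemma levi_adj_simps:
  "levi_adj d k F (Inl p) (Inr j) \<longleftrightarrow> p \<in> arr_sing d k F \<and> j < k \<and> p \<in> zero_locus d (F j)"
  "levi_adj d k F (Inr j) (Inl p) \<longleftrightarrow> p \<in> arr_sing d k F \<and> j < k \<and> p \<in> zero_locus d (F j)"
  "\<not> levi_adj d k F (Inl p) (Inl q)"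
  "\<not> levi_adj d k F (Inr i) (Inr j)"
  unfolding levi_adj_def by auto

lemma mod_2k_odd: "Suc (Suc (2*a)) mod (2*k) = 2 * (Suc a mod k)"
proof -
  have "Suc (Suc (2*a)) = 2 * Suc a" by simp
  then show ?thesis by (simp only: mult_mod_right)
qed

lemma even_mod_2k: "even (x mod (2*k)) \<longleftrightarrow> even (x::nat)"
  by (metis dvd_mod_iff dvd_triv_left)

lemma suc_mod_cycle: assumes "a < k" "b < k" "k \<ge> 3" "a = Suc b mod k" "b = Suc a mod k" shows False
proof (cases "Suc b < k")
  case True
  then have a: "a = Suc b" using assms(4) by simp
  have e: "b = Suc (Suc b) mod k" using assms(5) unfolding a .
  show False
  proof (cases "Suc (Suc b) < k")
    case True
    then have "Suc (Suc b) mod k = Suc (Suc b)" by (rule mod_less)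
    then show False using e by linarith
  next
    case False
    then have k: "k = Suc (Suc b)" using \<open>Suc b < k\<close> by simp
    have "Suc (Suc b) mod k = 0" unfolding k by simp
    then have "b = 0" using e by linarith
    then show False using k assms(3) by simp
  qed
next
  case False
  then have k: "k = Suc b" using assms(2) by simp
  have "Suc b mod k = 0" unfolding k by simp
  then have "a = 0" using assms(4) by linarith
  then have "b = Suc 0 mod k" using assms(5) by simp
  also have "\<dots> = 1" using assms(3) by simp
  finally show False using k assms(3) by simp
qed

theorem theorem5p3:
  fixes d k :: nat and F :: "nat \<Rightarrow> hpoly"
  assumes "d_arrangement d k F"
    and "k \<ge> 4"
    and "arr_t d k F 2 \<noteq> 0"
    and "\<forall>r>2. arr_t d k F r = 0"
  shows "has_induced_cycle (levi_verts d k F) (levi_adj d k F) (2 * k)"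
proof -
  note arr = assms(1)[unfolded d_arrangement_def]
  have d1: "d \<ge> 1" and k4: "k \<ge> 4" using arr assms(2) by auto
  define Z where "Z i = zero_locus d (F i)" for i
  have meet: "Z i \<inter> Z j \<noteq> {}" for i j
  proof -
    obtain v where v: "v \<noteq> (0,0,0)" "heval d (F i) v = 0" "heval d (F j) v = 0"
      using common_zero[OF d1] by blast
    then have "proj_point v \<in> Z i \<inter> Z j" unfolding Z_def zero_locus_def by blast
    then show ?thesis by blast
  qed
  have fin: "finite (Z i \<inter> Z j)" if "i < k" "j < k" "i \<noteq> j" for i j
  proof -
    have smG: "\<forall>v. v \<noteq> (0,0,0) \<and> heval d (F j) v = 0 \<longrightarrow> hgrad d (F j) v \<noteq> (0,0,0)"
      using arr that unfolding smooth_curve_def by blast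
    have tr: "\<forall>v. v \<noteq> (0,0,0) \<and> heval d (F i) v = 0 \<and> heval d (F j) v = 0 \<longrightarrow> (\<forall>c. hgrad d (F i) v \<noteq> cscale c (hgrad d (F j) v))"
      using arr that by blast
    show ?thesis unfolding Z_def by (rule finite_common[OF smG tr])
  qed
  define S where "S = arr_sing d k F"
  have S_eq: "S = (\<Union>i\<in>{..<k}. \<Union>j\<in>{j. j < k \<and> j \<noteq> i}. Z i \<inter> Z j)"
    unfolding S_def arr_sing_def Z_def by blast
  have finS: "finite S" unfolding S_eq
    by (rule finite_UN_I, simp, rule finite_UN_I, simp, rule fin, auto)
  have mult2: "{l. l < k \<and> p \<in> Z l} = {i, j}" if "i < k" "j < k" "i \<noteq> j" "p \<in> Z i" "p \<in> Z j" for i j p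
  proof -
    have pS: "p \<in> S" unfolding S_def arr_sing_def Z_def[symmetric] using that by blast
    have sub: "{i, j} \<subseteq> {l. l < k \<and> p \<in> Z l}" using that by auto
    have finL: "finite {l. l < k \<and> p \<in> Z l}" by simp
    have c2: "card {i, j} = 2" using that by simp
    have "card {l. l < k \<and> p \<in> Z l} \<le> 2"
    proof (rule ccontr)
      assume na: "\<not> ?thesis"
      define r where "r = card {l. l < k \<and> p \<in> Z l}"
      have r2: "r > 2" using na r_def by simp
      have "arr_mult d k F p = r" unfolding arr_mult_def r_def Z_def by simp
      then have "p \<in> {q \<in> arr_sing d k F. arr_mult d k F q = r}" using pS S_def by simp
      moreover have "finite {q \<in> arr_sing d k F. arr_mult d k F q = r}" using finS S_def by simp
      ultimately have "arr_t d k F r \<noteq> 0" unfolding arr_t_def by (metis card_0_eq empty_iff)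
      then show False using assms(4) r2 by simp
    qed
    then show ?thesis using card_subset_eq[OF finL sub] card_mono[OF finL sub] c2 by simp
  qed
  have sucne: "Suc a mod k \<noteq> a" "Suc a mod k < k" if "a < k" for a
    using that k4 by (auto simp: mod_Suc)
  define pt where "pt a = (SOME p. p \<in> Z a \<inter> Z (Suc a mod k))" for a
  have pt_in: "pt a \<in> Z a \<inter> Z (Suc a mod k)" for a
    unfolding pt_def using meet[of a "Suc a mod k"] by (metis some_in_eq)
  have pt_curves: "{l. l < k \<and> pt a \<in> Z l} = {a, Suc a mod k}" if "a < k" for a
    using mult2[of a "Suc a mod k" "pt a"] pt_in[of a] sucne[OF that] that by auto
  have pt_S: "pt a \<in> S" if "a < k" for a
    unfolding S_def arr_sing_def Z_def[symmetric] using pt_in[of a] sucne[OF that] that by blast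
  have pt_on: "pt a \<in> Z b \<longleftrightarrow> b = a \<or> b = Suc a mod k" if "a < k" "b < k" for a b
    using pt_curves[OF that(1)] that(2) by blast
  have pt_inj: "pt a \<noteq> pt b" if "a < k" "b < k" "a \<noteq> b" for a b
  proof
    assume e: "pt a = pt b"
    have "{a, Suc a mod k} = {b, Suc b mod k}" using pt_curves[OF that(1)] pt_curves[OF that(2)] e by simp
    then have "a = Suc b mod k" "b = Suc a mod k" using that by (metis doubleton_eq_iff)+
    then show False using suc_mod_cycle[OF that(1,2)] k4 by simp
  qed
  define vs where "vs = map (\<lambda>n. if even n then Inr (n div 2) else Inl (pt (n div 2))) [0..<2*k]"
  have len: "length vs = 2*k" unfolding vs_def by simp
  have nth: "vs ! n = (if even n then Inr (n div 2) else Inl (pt (n div 2)))" if "n < 2*k" for n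
    unfolding vs_def using that by simp
  have dist: "distinct vs"
    unfolding distinct_conv_nth len
  proof (intro allI impI)
    fix n m assume nm: "n < 2*k" "m < 2*k" "n \<noteq> m"
    have a: "n div 2 < k" "m div 2 < k" using nm by auto
    show "vs ! n \<noteq> vs ! m"
    proof (cases "even n"; cases "even m")
      assume "even n" "even m"
      then have "n div 2 \<noteq> m div 2" using nm(3) by (metis dvd_mult_div_cancel)
      then show ?thesis using nth nm \<open>even n\<close> \<open>even m\<close> by simp
    next
      assume "odd n" "odd m"
      then have "n div 2 \<noteq> m div 2" using nm(3) by (metis odd_two_times_div_two_succ)
      then show ?thesis using nth nm \<open>odd n\<close> \<open>odd m\<close> pt_inj[OF a] by simp
    qed (use nth nm in auto)
  qed
  have setv: "set vs \<subseteq> levi_verts d k F"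
  proof
    fix x assume "x \<in> set vs"
    then obtain n where n: "n < 2*k" "x = vs ! n" by (metis in_set_conv_nth len)
    have "n div 2 < k" using n by auto
    then show "x \<in> levi_verts d k F"
      using n nth pt_S unfolding levi_verts_def S_def by auto
  qed
  have adj: "levi_adj d k F (vs ! n) (vs ! m) \<longleftrightarrow> (m = Suc n mod (2*k) \<or> n = Suc m mod (2*k))"
    if nm: "n < 2*k" "m < 2*k" for n m
  proof -
    define a where "a = n div 2"
    define b where "b = m div 2"
    have ab: "a < k" "b < k" using nm a_def b_def by auto
    have key1: "(2*b = Suc (Suc (2*a)) mod (2*k)) \<longleftrightarrow> b = Suc a mod k" for a b
      unfolding mod_2k_odd by simp
    have key2: "(Suc (2*a) = Suc (2*b) mod (2*k)) \<longleftrightarrow> a = b" if "b < k" for a b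
      using that by simp
    show ?thesis
    proof (cases "even n"; cases "even m")
      assume e: "even n" "even m"
      have "odd (Suc n mod (2*k))" "odd (Suc m mod (2*k))" using e even_mod_2k by auto
      then have "m \<noteq> Suc n mod (2*k)" "n \<noteq> Suc m mod (2*k)" using e by auto
      then show ?thesis using nth nm e levi_adj_simps by simp
    next
      assume e: "odd n" "odd m"
      have "even (Suc n mod (2*k))" "even (Suc m mod (2*k))" using e even_mod_2k by auto
      then have "m \<noteq> Suc n mod (2*k)" "n \<noteq> Suc m mod (2*k)" using e by auto
      then show ?thesis using nth nm e levi_adj_simps by simp
    next
      assume e: "odd n" "even m"
      have n: "n = Suc (2*a)" and m: "m = 2*b" using e a_def b_def by auto
      have "levi_adj d k F (vs ! n) (vs ! m) \<longleftrightarrow> pt a \<in> Z b"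
        using nth nm e levi_adj_simps pt_S ab unfolding S_def Z_def by (simp add: a_def b_def)
      also have "\<dots> \<longleftrightarrow> b = a \<or> b = Suc a mod k" by (rule pt_on[OF ab])
      also have "\<dots> \<longleftrightarrow> (m = Suc n mod (2*k) \<or> n = Suc m mod (2*k))"
        unfolding n m using key1[of b a] key2[OF ab(2), of a] by auto
      finally show ?thesis .
    next
      assume e: "even n" "odd m"
      have n: "n = 2*a" and m: "m = Suc (2*b)" using e a_def b_def by auto
      have "levi_adj d k F (vs ! n) (vs ! m) \<longleftrightarrow> pt b \<in> Z a"
        using nth nm e levi_adj_simps pt_S ab unfolding S_def Z_def by (simp add: a_def b_def)
      also have "\<dots> \<longleftrightarrow> a = b \<or> a = Suc b mod k" by (rule pt_on[OF ab(2,1)])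
      also have "\<dots> \<longleftrightarrow> (m = Suc n mod (2*k) \<or> n = Suc m mod (2*k))"
        unfolding n m using key1[of a b] key2[OF ab(1), of b] by auto
      finally show ?thesis .
    qed
  qed
  show ?thesis unfolding has_induced_cycle_def
    using len dist setv adj k4 by (intro conjI exI[of _ vs]) auto
qed

end
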